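(* Under the standing assumptions, let $\{x_i\}_{i=1}^N$ be a solution of the delayed Hegselmann–Krause system. Then for all $i,j=1,\dots,N$, every unit vector $v\in\mathbb{R}^d$ and every $n\in\mathbb{N}_0$, $$\langle x_i(t)-x_j(t),v\rangle\le e^{-K(t-t_0)}\langle x_i(t_0)-x_j(t_0),v\rangle+\big(1-e^{-K(t-t_0)}\big)D_n\qquad\text{for all }t\ge t_0\ge n\bar\tau.$$ Moreover, for every $n\in\mathbb{N}_0$, $$D_{n+1}\le e^{-K\bar\tau}d(n\bar\tau)+\big(1-e^{-K\bar\tau}\big)D_n.$$
   Context: Standing assumptions: $N\ge 2$, $d\ge 1$, $\bar\tau>0$; $\tau:[0,\infty)\to[0,\bar\tau]$ continuous; $\psi:\mathbb{R}^d\times\mathbb{R}^d\to\mathbb{R}$ continuous, bounded and strictly positive, $K:=\|\psi\|_\infty$; initial data $x_i^0:[-\bar\tau,0]\to\mathbb{R}^d$ continuous. The delayed Hegselmann–Krause system is $$\frac{d}{dt}x_i(t)=\frac{1}{N-1}\sum_{j\ne i}\psi\big(x_i(t),x_j(t-\tau(t))\big)\big(x_j(t-\tau(t))-x_i(t)\big),\quad t>0,$$ with $x_i=x_i^0$ on $[-\bar\tau,0]$; a solution means continuous $x_i:[-\bar\tau,\infty)\to\mathbb{R}^d$, differentiable on $(0,\infty)$, satisfying this. $d(t):=\max_{i,j}|x_i(t)-x_j(t)|$. For $n\in\mathbb{N}_0$, $D_n:=\max_{i,j=1,\dots,N}\max_{s,t\in[n\bar\tau-\bar\tau,\,n\bar\tau]}|x_i(s)-x_j(t)|$.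 *)

theory Defs
  imports "HOL-Analysis.Analysis"
begin

definition hk_K :: "('a \<Rightarrow> 'a \<Rightarrow> real) \<Rightarrow> real" where
  "hk_K psi = (SUP p. \<bar>psi (fst p) (snd p)\<bar>)"

definition hk_solution ::
  "nat \<Rightarrow> real \<Rightarrow> (real \<Rightarrow> real) \<Rightarrow> ('a::real_normed_vector \<Rightarrow> 'a \<Rightarrow> real)
   \<Rightarrow> (nat \<Rightarrow> real \<Rightarrow> 'a) \<Rightarrow> (nat \<Rightarrow> real \<Rightarrow> 'a) \<Rightarrow> bool" where
  "hk_solution N taubar tau psi x0 x \<longleftrightarrow>
     (\<forall>i\<in>{1..N}.
        continuous_on {-taubar..} (x i) \<and>
        (\<forall>t\<in>{-taubar..0}. x i t = x0 i t) \<and>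
        (\<forall>t>0. (x i has_vector_derivative
            ((1 / (real N - 1)) *\<^sub>R
              (\<Sum>j\<in>{1..N}-{i}. psi (x i t) (x j (t - tau t)) *\<^sub>R (x j (t - tau t) - x i t))))
            (at t)))"

definition hk_diam :: "nat \<Rightarrow> (nat \<Rightarrow> real \<Rightarrow> 'a::real_normed_vector) \<Rightarrow> real \<Rightarrow> real" where
  "hk_diam N x t = Max {norm (x i t - x j t) | i j. i \<in> {1..N} \<and> j \<in> {1..N}}"

text \<open>D_n (the maximum is attained by continuity; we write it as a supremum).\<close>
definition hk_D :: "nat \<Rightarrow> real \<Rightarrow> (nat \<Rightarrow> real \<Rightarrow> 'a::real_normed_vector) \<Rightarrow> nat \<Rightarrow> real" where
  "hk_D N taubar x n = Sup {norm (x i s - x j t) | i j s t.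
      i \<in> {1..N} \<and> j \<in> {1..N} \<and>
      s \<in> {real n * taubar - taubar .. real n * taubar} \<and>
      t \<in> {real n * taubar - taubar .. real n * taubar}}"

end

theory Submission imports Defs begin

lemma gron:
  fixes y y' :: "real \<Rightarrow> real" and a b K c :: real
  assumes ab: "a \<le> b" and cont: "continuous_on {a..b} y"
    and der: "\<And>t. a < t \<Longrightarrow> t < b \<Longrightarrow> (y has_real_derivative y' t) (at t)"
    and est: "\<And>t. a < t \<Longrightarrow> t < b \<Longrightarrow> y' t \<le> K * (c - y t)"
  shows "exp (K*a) * (c - y a) \<le> exp (K*b) * (c - y b)"
proof (rule DERIV_nonneg_imp_increasing_open[OF ab])
  fix t assume t: "a < t" "t < b"
  have "((\<lambda>t. exp (K*t) * (c - y t)) has_real_derivative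
          exp (K*t) * K * (c - y t) + exp (K*t) * (- y' t)) (at t)"
    by (rule derivative_eq_intros der[OF t] refl | simp)+
  moreover have "exp (K*t) * K * (c - y t) + exp (K*t) * (- y' t) \<ge> 0"
  proof -
    have "exp (K*t) * K * (c - y t) + exp (K*t) * (- y' t) = exp (K*t) * (K*(c - y t) - y' t)"
      by (simp add: algebra_simps)
    also have "\<dots> \<ge> 0" using est[OF t] by simp
    finally show ?thesis .
  qed
  ultimately show "\<exists>z. ((\<lambda>t. exp (K*t) * (c - y t)) has_real_derivative z) (at t) \<and> z \<ge> 0"
    by blast
next
  show "continuous_on {a..b} (\<lambda>t. exp (K*t) * (c - y t))"
    by (intro continuous_intros cont)
qed

lemma gron2:
  fixes y y' :: "real \<Rightarrow> real" and a b K c :: real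
  assumes ab: "a \<le> b" and cont: "continuous_on {a..b} y"
    and der: "\<And>t. a < t \<Longrightarrow> t < b \<Longrightarrow> (y has_real_derivative y' t) (at t)"
    and est: "\<And>t. a < t \<Longrightarrow> t < b \<Longrightarrow> y' t \<le> K * (c - y t)"
  shows "y b \<le> exp (- K * (b - a)) * y a + (1 - exp (- K * (b - a))) * c"
proof -
  have h: "exp (K*a) * (c - y a) \<le> exp (K*b) * (c - y b)" by (rule gron[OF assms])
  have "exp (-K*b) * (exp (K*a) * (c - y a)) \<le> exp (-K*b) * (exp (K*b) * (c - y b))"
    using h by (intro mult_left_mono) auto
  moreover have "exp (-K*b) * exp (K*a) = exp (- K * (b - a))"
    by (simp add: exp_add[symmetric] algebra_simps)
  moreover have "exp (-K*b) * exp (K*b) = 1" by (simp add: exp_add[symmetric])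
  ultimately have "exp (- K * (b - a)) * (c - y a) \<le> c - y b"
    by (metis mult.assoc mult_1)
  then show ?thesis by (simp add: algebra_simps)
qed

lemma inner_deriv:
  fixes f :: "real \<Rightarrow> 'a::real_inner"
  assumes "(f has_vector_derivative f') (at t)"
  shows "((\<lambda>t. inner (f t) v) has_real_derivative inner f' v) (at t)"
proof -
  have "((\<lambda>t. inner (f t) v) has_derivative (\<lambda>h. inner (h *\<^sub>R f') v)) (at t)"
    using assms unfolding has_vector_derivative_def by (rule has_derivative_inner_left)
  then show ?thesis
    by (simp add: has_field_derivative_def mult.commute[of _ "inner f' v"])
qed

theorem lemma2p4:
  fixes N :: nat and taubar :: real and tau :: "real \<Rightarrow> real"
    and psi :: "'a::euclidean_space \<Rightarrow> 'a \<Rightarrow> real"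
    and x0 x :: "nat \<Rightarrow> real \<Rightarrow> 'a"
  assumes N2: "N \<ge> 2"
    and taubar_pos: "taubar > 0"
    and tau_cont: "continuous_on {0..} tau"
    and tau_range: "\<And>t. t \<ge> 0 \<Longrightarrow> 0 \<le> tau t \<and> tau t \<le> taubar"
    and psi_cont: "continuous_on UNIV (\<lambda>p. psi (fst p) (snd p))"
    and psi_bdd: "bounded (range (\<lambda>p. psi (fst p) (snd p)))"
    and psi_pos: "\<And>a b. psi a b > 0"
    and x0_cont: "\<And>i. i \<in> {1..N} \<Longrightarrow> continuous_on {-taubar..0} (x0 i)"
    and sol: "hk_solution N taubar tau psi x0 x"
  shows "(\<forall>i\<in>{1..N}. \<forall>j\<in>{1..N}. \<forall>v::'a. \<forall>n::nat. \<forall>t0 t.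
            norm v = 1 \<and> real n * taubar \<le> t0 \<and> t0 \<le> t \<longrightarrow>
            inner (x i t - x j t) v
              \<le> exp (- hk_K psi * (t - t0)) * inner (x i t0 - x j t0) v
                 + (1 - exp (- hk_K psi * (t - t0))) * hk_D N taubar x n)
       \<and> (\<forall>n::nat. hk_D N taubar x (Suc n)
            \<le> exp (- hk_K psi * taubar) * hk_diam N x (real n * taubar)
               + (1 - exp (- hk_K psi * taubar)) * hk_D N taubar x n)"
proof -
  define K where "K = hk_K psi"
  have psiK: "psi a b \<le> K" for a b
  proof -
    have bdd: "bdd_above (range (\<lambda>p. \<bar>psi (fst p) (snd p)\<bar>))"
    proof -
      obtain B where "\<forall>y\<in>range (\<lambda>p. psi (fst p) (snd p)). norm y \<le> B"
        using psi_bdd unfolding bounded_iff by blast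
      then show ?thesis by (auto intro!: bdd_aboveI[of _ B])
    qed
    have "\<bar>psi (fst (a,b)) (snd (a,b))\<bar> \<le> K"
      unfolding K_def hk_K_def by (rule cSUP_upper[OF _ bdd]) simp
    then show ?thesis by simp
  qed
  have K0: "0 \<le> K" using psiK[of 0 0] psi_pos[of 0 0] by linarith
  define I where "I n = {real n * taubar - taubar .. real n * taubar}" for n :: nat
  define F where "F k t = (1 / (real N - 1)) *\<^sub>R
              (\<Sum>j\<in>{1..N}-{k}. psi (x k t) (x j (t - tau t)) *\<^sub>R (x j (t - tau t) - x k t))" for k t
  have xcont: "continuous_on {-taubar..} (x k)" if "k \<in> {1..N}" for k
    using sol that unfolding hk_solution_def by blast
  have xder: "(x k has_vector_derivative F k t) (at t)" if "k \<in> {1..N}" "t > 0" for k t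
    using sol that unfolding hk_solution_def F_def by blast
  have yder: "((\<lambda>t. inner (x k t) v) has_real_derivative inner (F k t) v) (at t)"
    if "k \<in> {1..N}" "t > 0" for k t v
    by (rule inner_deriv[OF xder[OF that]])
  have ycont: "continuous_on S (\<lambda>t. inner (x k t) v)" if "k \<in> {1..N}" "S \<subseteq> {-taubar..}" for k S v
    by (intro continuous_intros continuous_on_subset[OF xcont[OF that(1)] that(2)])
  have N1: "real N - 1 > 0" using N2 by simp
  have Fest: "inner (F k t) v \<le> K * (c - inner (x k t) v)"
    if k: "k \<in> {1..N}" and nb: "\<forall>j\<in>{1..N}. inner (x j (t - tau t)) v \<le> c"
      and yk: "inner (x k t) v \<le> c" for k t v c
  proof -
    have cardk: "card ({1..N} - {k}) = N - 1" using k by simp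
    have "inner (F k t) v = (1 / (real N - 1)) *
       (\<Sum>j\<in>{1..N}-{k}. psi (x k t) (x j (t - tau t)) * (inner (x j (t - tau t)) v - inner (x k t) v))"
      unfolding F_def by (simp add: inner_sum_left inner_diff_left)
    also have "\<dots> \<le> (1 / (real N - 1)) * (\<Sum>j\<in>{1..N}-{k}. K * (c - inner (x k t) v))"
    proof (intro mult_left_mono sum_mono)
      fix j assume "j \<in> {1..N} - {k}"
      then have "inner (x j (t - tau t)) v \<le> c" using nb by auto
      then have "psi (x k t) (x j (t - tau t)) * (inner (x j (t - tau t)) v - inner (x k t) v)
          \<le> psi (x k t) (x j (t - tau t)) * (c - inner (x k t) v)"
        using psi_pos by (intro mult_left_mono) (auto simp: less_imp_le)
      also have "\<dots> \<le> K * (c - inner (x k t) v)"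
        using psiK yk by (intro mult_right_mono) auto
      finally show "psi (x k t) (x j (t - tau t)) * (inner (x j (t - tau t)) v - inner (x k t) v)
          \<le> K * (c - inner (x k t) v)" .
    qed (use N1 in simp)
    also have "\<dots> = K * (c - inner (x k t) v)"
      using cardk N2 N1 by (simp add: of_nat_diff)
    finally show ?thesis .
  qed
  have ub: "inner (x k t) v \<le> exp (- K * (t - t0)) * inner (x k t0) v + (1 - exp (- K * (t - t0))) * M"
    if M: "\<forall>k\<in>{1..N}. \<forall>s\<in>I n. inner (x k s) v \<le> M"
      and k: "k \<in> {1..N}" and t0: "real n * taubar \<le> t0" "t0 \<le> t" for v n M k t0 t
  proof -
    define a where "a = real n * taubar"
    have a0: "a \<ge> 0" unfolding a_def using taubar_pos by simp
    have inv: "inner (x k t1) v \<le> M" if k: "k \<in> {1..N}" and t1: "t1 \<ge> a - taubar" for k t1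
    proof (rule ccontr)
      assume "\<not> ?thesis"
      then have gt: "inner (x k t1) v > M" by simp
      have t1a: "t1 > a"
      proof (rule ccontr)
        assume "\<not> t1 > a"
        then have "t1 \<in> I n" using t1 unfolding I_def a_def by auto
        then have "inner (x k t1) v \<le> M" using M k by blast
        then show False using gt by simp
      qed
      define \<epsilon> where "\<epsilon> = (inner (x k t1) v - M) / 2"
      have e0: "\<epsilon> > 0" using gt unfolding \<epsilon>_def by simp
      define c where "c = M + \<epsilon>"
      define A where "A = {t \<in> {a..t1}. \<exists>j\<in>{1..N}. c \<le> inner (x j t) v}"
      have At1: "t1 \<in> A" unfolding A_def c_def \<epsilon>_def using k t1a gt by (auto intro!: bexI[of _ k] simp: field_simps)
      have "A = (\<Union>j\<in>{1..N}. {t \<in> {a..t1}. (\<lambda>_. c) t \<le> inner (x j t) v})"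
        unfolding A_def by auto
      also have "closed \<dots>"
        using a0 taubar_pos
        by (intro closed_UN finite_atLeastAtMost ballI continuous_on_closed_Collect_le
            continuous_on_const ycont) auto
      finally have clA: "closed A" .
      have bddA: "bdd_below A" unfolding A_def by (auto intro!: bdd_belowI[of _ a])
      define T where "T = Inf A"
      have TA: "T \<in> A" unfolding T_def using closed_contains_Inf[OF _ bddA clA] At1 by blast
      then obtain j0 where j0: "j0 \<in> {1..N}" "c \<le> inner (x j0 T) v" and Tin: "a \<le> T" "T \<le> t1"
        unfolding A_def by auto
      have Ta: "T > a"
      proof (rule ccontr)
        assume "\<not> T > a"
        then have "T = a" using Tin by simp
        then have "T \<in> I n" unfolding I_def a_def using taubar_pos by auto
        then show False using M j0 e0 unfolding c_def by fastforce
      qed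
      have below: "inner (x j s) v < c" if j: "j \<in> {1..N}" and s: "a - taubar \<le> s" "s < T" for j s
      proof (cases "s \<le> a")
        case True
        then have "s \<in> I n" using s unfolding I_def a_def by auto
        then show ?thesis using M j e0 unfolding c_def by fastforce
      next
        case False
        have "s \<notin> A"
        proof
          assume "s \<in> A"
          then have "T \<le> s" unfolding T_def by (rule cInf_lower[OF _ bddA])
          then show False using s by simp
        qed
        then have "\<not> (\<exists>j\<in>{1..N}. c \<le> inner (x j s) v)" using False s Tin unfolding A_def by auto
        then show ?thesis using j by force
      qed
      have "exp (K*a) * (c - inner (x j0 a) v) \<le> exp (K*T) * (c - inner (x j0 T) v)"
      proof (rule gron[where y' = "\<lambda>t. inner (F j0 t) v"])
        show "a \<le> T" using Tin by simp
        show "continuous_on {a..T} (\<lambda>t. inner (x j0 t) v)"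
          using j0 a0 taubar_pos by (intro ycont) auto
      next
        fix t assume tt: "a < t" "t < T"
        then show "((\<lambda>t. inner (x j0 t) v) has_real_derivative inner (F j0 t) v) (at t)"
          using yder j0 a0 by auto
        have tr: "0 \<le> tau t" "tau t \<le> taubar" using tau_range[of t] tt a0 by auto
        show "inner (F j0 t) v \<le> K * (c - inner (x j0 t) v)"
        proof (rule Fest[OF j0(1)])
          show "\<forall>j\<in>{1..N}. inner (x j (t - tau t)) v \<le> c"
            using below tr tt by (auto intro!: less_imp_le)
          show "inner (x j0 t) v \<le> c"
            using below j0 tt taubar_pos by (auto intro!: less_imp_le)
        qed
      qed
      also have "\<dots> \<le> 0" using j0 by (intro mult_nonneg_nonpos) auto
      finally have le0: "exp (K*a) * (c - inner (x j0 a) v) \<le> 0" .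
      have "a \<in> I n" unfolding I_def a_def using taubar_pos by auto
      then have "inner (x j0 a) v \<le> M" using M j0 by auto
      then have "c - inner (x j0 a) v > 0" using e0 unfolding c_def by simp
      then have "exp (K*a) * (c - inner (x j0 a) v) > 0" by simp
      then show False using le0 by simp
    qed
    have t00: "0 \<le> t0" using a0 t0 unfolding a_def by linarith
    show ?thesis
    proof (rule gron2[where y' = "\<lambda>t. inner (F k t) v"])
      show "t0 \<le> t" by fact
      show "continuous_on {t0..t} (\<lambda>t. inner (x k t) v)"
        using k t00 taubar_pos by (intro ycont) auto
    next
      fix s assume ss: "t0 < s" "s < t"
      then have s0: "s > 0" using t00 by simp
      then show "((\<lambda>t. inner (x k t) v) has_real_derivative inner (F k s) v) (at s)"
        using yder k by auto
      have tr: "0 \<le> tau s" "tau s \<le> taubar" using tau_range[of s] s0 by auto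
      show "inner (F k s) v \<le> K * (M - inner (x k s) v)"
      proof (rule Fest[OF k])
        show "\<forall>j\<in>{1..N}. inner (x j (s - tau s)) v \<le> M"
          using inv tr ss t0 unfolding a_def by auto
        show "inner (x k s) v \<le> M"
          using inv k ss t0 taubar_pos unfolding a_def by auto
      qed
    qed
  qed
  have 1: "1 \<in> {1..N}" using N2 by simp
  have IS: "I n \<subseteq> {-taubar..}" for n unfolding I_def using taubar_pos by auto
  have an: "real n * taubar \<in> I n" for n unfolding I_def using taubar_pos by auto
  have bddD: "bdd_above {norm (x i s - x j t) | i j s t.
      i \<in> {1..N} \<and> j \<in> {1..N} \<and> s \<in> I n \<and> t \<in> I n}" for n
  proof -
    have "compact (\<Union>k\<in>{1..N}. x k ` I n)"
      by (intro compact_UN finite_atLeastAtMost compact_continuous_image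
          continuous_on_subset[OF xcont IS]) (auto simp: I_def)
    then obtain B where B: "\<forall>y\<in>(\<Union>k\<in>{1..N}. x k ` I n). norm y \<le> B"
      using compact_imp_bounded bounded_iff by metis
    show ?thesis
    proof (rule bdd_aboveI[of _ "2*B"], clarify)
      fix i j s t assume h: "i \<in> {1..N}" "j \<in> {1..N}" "s \<in> I n" "t \<in> I n"
      have "norm (x i s - x j t) \<le> norm (x i s) + norm (x j t)" by (rule norm_triangle_ineq4)
      also have "\<dots> \<le> 2*B"
      proof -
        have "norm (x i s) \<le> B" "norm (x j t) \<le> B" using B h by blast+
        then show ?thesis by simp
      qed
      finally show "norm (x i s - x j t) \<le> 2*B" .
    qed
  qed
  have Dge: "norm (x i s - x j t) \<le> hk_D N taubar x n"
    if "i \<in> {1..N}" "j \<in> {1..N}" "s \<in> I n" "t \<in> I n" for i j s t n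
    unfolding hk_D_def using that bddD[of n] unfolding I_def
    by (intro cSup_upper) auto
  have D0: "0 \<le> hk_D N taubar x n" for n
    using Dge[OF 1 1 an an, of n] by simp
  have MM: "\<exists>M. (\<forall>k\<in>{1..N}. \<forall>s\<in>I n. inner (x k s) v \<le> M) \<and>
              (\<forall>k\<in>{1..N}. \<forall>s\<in>I n. inner (x k s) (-v) \<le> hk_D N taubar x n - M)"
    if nv: "norm v = 1" for v n
  proof -
    define U where "U = {inner (x k s) v | k s. k \<in> {1..N} \<and> s \<in> I n}"
    have key: "inner (x l s') v \<le> inner (x k s) v + hk_D N taubar x n"
      if "l \<in> {1..N}" "k \<in> {1..N}" "s' \<in> I n" "s \<in> I n" for l k s s'
    proof -
      have "inner (x l s' - x k s) v \<le> norm (x l s' - x k s) * norm v" by (rule norm_cauchy_schwarz)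
      also have "\<dots> \<le> hk_D N taubar x n" using Dge[OF that] nv by simp
      finally show ?thesis by (simp add: inner_diff_left)
    qed
    have Une: "U \<noteq> {}" unfolding U_def using 1 an by blast
    have Ubdd: "bdd_above U" unfolding U_def
      by (rule bdd_aboveI[of _ "inner (x 1 (real n * taubar)) v + hk_D N taubar x n"])
         (use key[OF _ 1 _ an] in blast)
    show ?thesis
    proof (intro exI conjI ballI)
      fix k s assume ks: "k \<in> {1..N}" "s \<in> I n"
      show "inner (x k s) v \<le> Sup U"
        using ks unfolding U_def by (intro cSup_upper[OF _ Ubdd[unfolded U_def]]) auto
      have "Sup U \<le> inner (x k s) v + hk_D N taubar x n"
        using Une by (rule cSup_least) (use key[OF _ ks(1) _ ks(2)] in \<open>auto simp: U_def\<close>)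
      then show "inner (x k s) (-v) \<le> hk_D N taubar x n - Sup U" by simp
    qed
  qed
  show ?thesis
  proof (intro conjI ballI allI impI)
    fix i j v n t0 t
    assume ij: "i \<in> {1..N}" "j \<in> {1..N}"
      and h: "norm (v::'a) = 1 \<and> real n * taubar \<le> t0 \<and> t0 \<le> t"
    obtain M where M1: "\<forall>k\<in>{1..N}. \<forall>s\<in>I n. inner (x k s) v \<le> M"
      and M2: "\<forall>k\<in>{1..N}. \<forall>s\<in>I n. inner (x k s) (-v) \<le> hk_D N taubar x n - M"
      using MM h by blast
    define e where "e = exp (- K * (t - t0))"
    have u1: "inner (x i t) v \<le> e * inner (x i t0) v + (1 - e) * M"
      unfolding e_def using ub[OF M1 ij(1)] h by blast
    have u2: "inner (x j t) (-v) \<le> e * inner (x j t0) (-v) + (1 - e) * (hk_D N taubar x n - M)"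
      unfolding e_def using ub[OF M2 ij(2)] h by blast
    have "inner (x i t - x j t) v \<le> e * inner (x i t0 - x j t0) v + (1 - e) * hk_D N taubar x n"
      using u1 u2 by (simp add: inner_diff_left algebra_simps)
    then show "inner (x i t - x j t) v
              \<le> exp (- hk_K psi * (t - t0)) * inner (x i t0 - x j t0) v
                 + (1 - exp (- hk_K psi * (t - t0))) * hk_D N taubar x n"
      unfolding e_def K_def by simp
  next
    fix n
    define a where "a = real n * taubar"
    define e where "e = exp (- K * taubar)"
    define D where "D = hk_D N taubar x n"
    define R where "R = e * hk_diam N x a + (1 - e) * D"
    have e01: "0 \<le> e" "e \<le> 1" unfolding e_def using K0 taubar_pos by auto
    have finS: "finite {norm (x i a - x j a) | i j. i \<in> {1..N} \<and> j \<in> {1..N}}"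
      by (rule finite_image_set2) auto
    have diam: "norm (x i a - x j a) \<le> hk_diam N x a" if "i \<in> {1..N}" "j \<in> {1..N}" for i j
      unfolding hk_diam_def using that by (intro Max_ge[OF finS]) auto
    have R0: "0 \<le> R" unfolding R_def D_def
      using diam[OF 1 1] D0[of n] e01 by (intro add_nonneg_nonneg mult_nonneg_nonneg) auto
    have ISuc: "{real (Suc n) * taubar - taubar .. real (Suc n) * taubar} = {a .. a + taubar}"
      unfolding a_def by (simp add: algebra_simps)
    have "hk_D N taubar x (Suc n) \<le> R"
      unfolding hk_D_def[of N taubar x "Suc n"] ISuc
    proof (rule cSup_least)
      show "{norm (x i s - x j t) |i j s t. i \<in> {1..N} \<and> j \<in> {1..N} \<and>
          s \<in> {a..a + taubar} \<and> t \<in> {a..a + taubar}} \<noteq> {}"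
        using 1 taubar_pos by fastforce
    next
      fix z assume "z \<in> {norm (x i s - x j t) |i j s t. i \<in> {1..N} \<and> j \<in> {1..N} \<and>
          s \<in> {a..a + taubar} \<and> t \<in> {a..a + taubar}}"
      then obtain i j s t where z: "z = norm (x i s - x j t)" and ij: "i \<in> {1..N}" "j \<in> {1..N}"
        and st: "s \<in> {a..a + taubar}" "t \<in> {a..a + taubar}" by blast
      show "z \<le> R"
      proof (cases "x i s - x j t = 0")
        case True then show ?thesis using z R0 by simp
      next
        case False
        define w where "w = x i s - x j t"
        define v where "v = w /\<^sub>R norm w"
        have nv: "norm v = 1" unfolding v_def w_def using False by simp
        have zw: "z = inner (x i s) v + inner (x j t) (-v)"
        proof -
          have "inner w v = norm w" unfolding v_def using False
            by (simp add: w_def power2_norm_eq_inner[symmetric] power2_eq_square)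
          then show ?thesis unfolding z w_def by (simp add: inner_diff_left)
        qed
        obtain M where M1: "\<forall>k\<in>{1..N}. \<forall>s\<in>I n. inner (x k s) v \<le> M"
          and M2: "\<forall>k\<in>{1..N}. \<forall>s\<in>I n. inner (x k s) (-v) \<le> D - M"
          using MM[OF nv] unfolding D_def by blast
        define A where "A = exp (- K * (s - a))"
        define B where "B = exp (- K * (t - a))"
        define Xi where "Xi = inner (x i a) v"
        define Xj where "Xj = inner (x j a) (-v)"
        have u1: "inner (x i s) v \<le> A * Xi + (1 - A) * M"
          unfolding A_def Xi_def using ub[OF M1 ij(1), of a s] st unfolding a_def by auto
        have u2: "inner (x j t) (-v) \<le> B * Xj + (1 - B) * (D - M)"
          unfolding B_def Xj_def using ub[OF M2 ij(2), of a t] st unfolding a_def by auto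
        have Xi: "Xi \<le> M" unfolding Xi_def a_def using M1 ij an by blast
        have Xj: "Xj \<le> D - M" unfolding Xj_def a_def using M2 ij an by blast
        have Ae: "e \<le> A" unfolding A_def e_def using st K0
          by (simp add: mult_left_mono)
        have Be: "e \<le> B" unfolding B_def e_def using st K0
          by (simp add: mult_left_mono)
        have "e * (M - Xi) \<le> A * (M - Xi)" using Ae Xi by (intro mult_right_mono) auto
        moreover have "e * (D - M - Xj) \<le> B * (D - M - Xj)" using Be Xj by (intro mult_right_mono) auto
        moreover have "Xi + Xj \<le> hk_diam N x a"
        proof -
          have "Xi + Xj = inner (x i a - x j a) v" unfolding Xi_def Xj_def by (simp add: inner_diff_left)
          also have "\<dots> \<le> norm (x i a - x j a) * norm v" by (rule norm_cauchy_schwarz)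
          also have "\<dots> \<le> hk_diam N x a" using diam[OF ij] nv by simp
          finally show ?thesis .
        qed
        moreover have "e * (Xi + Xj) \<le> e * hk_diam N x a"
          using calculation(3) e01 by (intro mult_left_mono) auto
        ultimately show ?thesis using u1 u2 zw unfolding R_def
          by (simp add: algebra_simps)
      qed
    qed
    then show "hk_D N taubar x (Suc n)
            \<le> exp (- hk_K psi * taubar) * hk_diam N x (real n * taubar)
               + (1 - exp (- hk_K psi * taubar)) * hk_D N taubar x n"
      unfolding R_def e_def D_def a_def K_def .
  qed
qed

end
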